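(* Let $R$ be a regular run, $x$ a track, and $0=t_0<t_1<t_2<\cdots$ the significant moments of $x$. Then: (1) $\mathrm{Deadline}(x)=\infty$ at $0$ and over every interval $(t_{3i},t_{3i+1}]$, and $\mathrm{Deadline}(x)=t_{3i+1}+W$ over every interval $(t_{3i+1},t_{3i+3}]$ (and if the sequence is finite with last element $t_k$, then $\mathrm{Deadline}(x)=\infty$ over $(t_k,\infty)$); (2) if $0\le a<b<\infty$ and $\mathrm{TrackStatus}(x)\neq\text{incrossing}$ over $(a,b)$, then $\mathrm{Deadline}(x)\ge b-\Delta_{close}$ over $(a,b)$.
   Context: Setting (evolving algebra for the railroad crossing). States are structures over a vocabulary containing: a finite universe Tracks; the reals and ExtendedReals $=\mathbb{R}\cup\{\infty\}$ with standard $<$ and $+$ ($\infty$ largest); a nullary real-valued symbol $\mathrm{CT}$ (current time); positive real constants $d_{close},d_{open},d_{min},d_{max}$ with $d_{close}<d_{min}\le d_{max}$; a unary function TrackStatus from Tracks to $\{\text{empty},\text{coming},\text{incrossing}\}$; a unary function Deadline from Tracks to ExtendedReals; a nullary Dir with values in $\{\text{open},\text{close}\}$; a nullary GateStatus with values in $\{\text{opened},\text{closed}\}$. Put $W=d_{min}-d_{close}$ and $\Delta_{close}=d_{close}+(d_{max}-d_{min})=d_{max}-W$. For a track $x$, $s(x)$ is the condition [$\mathrm{TrackStatus}(x)=\text{empty}$ or $\mathrm{CT}+d_{open}<\mathrm{Deadline}(x)$], and SafeToOpen is $\forall x\in\mathrm{Tracks}\ s(x)$. The program has two modules (agents). Gate: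 simultaneously OpenGate "if Dir=open then GateStatus:=opened" and CloseGate "if Dir=close then GateStatus:=closed". Controller: simultaneously, for every track $x$, SetDeadline$(x)$ "if TrackStatus$(x)$=coming and Deadline$(x)=\infty$ then Deadline$(x):=\mathrm{CT}+W$", SignalClose$(x)$ "if $\mathrm{CT}=$Deadline$(x)$ then Dir:=close", ClearDeadline$(x)$ "if TrackStatus$(x)$=empty and Deadline$(x)<\infty$ then Deadline$(x):=\infty$", together with SignalOpen "if Dir=close and SafeToOpen then Dir:=open". Executing a module means computing all updates it generates in the current state and performing them simultaneously (nothing happens if the update set is inconsistent). A module is enabled at a state if its update set is consistent and contains an update that changes the state. TrackStatus is external (changed only by the environment); Deadline, Dir, GateStatus are internal (changed only by the modules); other symbols are static. Runs: for $t\mapsto R(t)$, $t\in[0,\infty)$, let $\rho(t)$ be the reduct of $R(t)$ without CT. $R$ is a pre-run if all $R(t)$ share a superuniverse, $\mathrm{CT}=t$ in $R(t)$, and for every $\tau>0$ there are $0=t_0<\dots<t_n=\tau$ with $\rho$ constant on each $(t_i,t_{i+1})$. For a term $e$ (free variables fixed), $e_t$ is its value in $R(t)$, $e_{t+}$ (resp. $e_{t-}$, $t>0$) its constant value on some $(t,t+\epsilon)$ (resp. $(t-\epsilon,t)$); likewise $\rho(t\pm)$. $e$ holds over an interval if it holds at each point; $e$ becomes (is set to) $a$ at $t$ if $e_{t-}\ne a=e_t$ or $e_t\neq a=e_{t+}$. A pre-run is a run if (i) whenever $\rho(t+)\neq\rho(t)$, $\rho(t+)$ is the CT-free reduct of the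 result of executing some modules at $R(t)$ (these agents fire at $t$), with external functions equal in $\rho(t)$ and $\rho(t+)$; (ii) whenever $t>0$ and $\rho(t)\ne\rho(t-)$, they differ only in external functions. An agent is immediate if it fires at every moment it is enabled; bounded if immediate or there is $b>0$ with no interval $(t,t+b)$ over which it is enabled but never fires. Initial states: TrackStatus$(x)$=empty and Deadline$(x)=\infty$ for every track $x$. A regular run is a run $R$ with $R(0)$ initial such that: (Train Motion) for each track $x$ there is a finite or infinite sequence $0=t_0<t_1<t_2<\cdots$ (the significant moments of $x$) with TrackStatus$(x)$=empty over each $[t_{3i},t_{3i+1})$, =coming over each $[t_{3i+1},t_{3i+2})$ where $d_{min}\le t_{3i+2}-t_{3i+1}\le d_{max}$, =incrossing over each $[t_{3i+2},t_{3i+3})$, and, if the sequence is finite with last element $t_k$, then $3\mid k$ and TrackStatus$(x)$=empty over $[t_k,\infty)$; (Controller Timing) Controller is immediate; (Gate Timing) Gate is bounded, there is no interval $(t,t+d_{close})$ over which Dir=close and GateStatus=opened both hold, and no interval $(t,t+d_{open})$ over which Dir=open and GateStatus=closed both hold. *)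

theory Defs
  imports Complex_Main "HOL-Library.Extended_Nat"
begin

datatype xreal = Fin real | PInf

fun xlt :: "xreal \<Rightarrow> xreal \<Rightarrow> bool" where
  "xlt (Fin a) (Fin b) = (a < b)"
| "xlt (Fin a) PInf = True"
| "xlt PInf _ = False"

definition xle :: "xreal \<Rightarrow> xreal \<Rightarrow> bool" where
  "xle a b \<longleftrightarrow> xlt a b \<or> a = b"

datatype tstat = Empty | Coming | Incrossing
datatype dirval = Open | Close
datatype gstat = Opened | Closed
datatype agent = Gate | Controller

text \<open>CT-free part of a state (the reduct \<rho>(t)); CT is the time parameter.
  Tracks is the finite type 'tr.\<close>
record 'tr st =
  trackstatus :: "'tr \<Rightarrow> tstat"
  deadline :: "'tr \<Rightarrow> xreal"
  dir :: dirval
  gatestatus :: gstat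

record 'tr upd =
  uDL :: "('tr \<times> xreal) set"
  uDir :: "dirval set"
  uGS :: "gstat set"

definition W :: "real \<Rightarrow> real \<Rightarrow> real" where
  "W dclose dmin = dmin - dclose"

definition Delta_close :: "real \<Rightarrow> real \<Rightarrow> real \<Rightarrow> real" where
  "Delta_close dclose dmin dmax = dclose + (dmax - dmin)"

definition safe_to_open :: "real \<Rightarrow> real \<Rightarrow> 'tr st \<Rightarrow> bool" where
  "safe_to_open dopen ct s \<longleftrightarrow>
     (\<forall>x. trackstatus s x = Empty \<or> xlt (Fin (ct + dopen)) (deadline s x))"

definition upd_gate :: "'tr st \<Rightarrow> 'tr upd" where
  "upd_gate s = \<lparr> uDL = {}, uDir = {},
     uGS = {g. (dir s = Open \<and> g = Opened) \<or> (dir s = Close \<and> g = Closed)} \<rparr>"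

definition upd_ctrl :: "real \<Rightarrow> real \<Rightarrow> real \<Rightarrow> real \<Rightarrow> 'tr st \<Rightarrow> 'tr upd" where
  "upd_ctrl dclose dopen dmin ct s = \<lparr>
     uDL = {(x, a). (trackstatus s x = Coming \<and> deadline s x = PInf \<and> a = Fin (ct + W dclose dmin))
                  \<or> (trackstatus s x = Empty \<and> xlt (deadline s x) PInf \<and> a = PInf)},
     uDir = {d. (d = Close \<and> (\<exists>x. deadline s x = Fin ct))
              \<or> (d = Open \<and> dir s = Close \<and> safe_to_open dopen ct s)},
     uGS = {} \<rparr>"

definition upd_of :: "real \<Rightarrow> real \<Rightarrow> real \<Rightarrow> agent \<Rightarrow> real \<Rightarrow> 'tr st \<Rightarrow> 'tr upd" where
  "upd_of dclose dopen dmin a ct s =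
     (case a of Gate \<Rightarrow> upd_gate s | Controller \<Rightarrow> upd_ctrl dclose dopen dmin ct s)"

definition consistent :: "'tr upd \<Rightarrow> bool" where
  "consistent U \<longleftrightarrow>
     (\<forall>x a b. (x, a) \<in> uDL U \<longrightarrow> (x, b) \<in> uDL U \<longrightarrow> a = b)
   \<and> (\<forall>d\<in>uDir U. \<forall>e\<in>uDir U. d = e)
   \<and> (\<forall>g\<in>uGS U. \<forall>h\<in>uGS U. g = h)"

definition apply_upd :: "'tr upd \<Rightarrow> 'tr st \<Rightarrow> 'tr st" where
  "apply_upd U s = s\<lparr>
     deadline := (\<lambda>x. if \<exists>a. (x, a) \<in> uDL U then (THE a. (x, a) \<in> uDL U) else deadline s x),
     dir := (if uDir U = {} then dir s else the_elem (uDir U)),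
     gatestatus := (if uGS U = {} then gatestatus s else the_elem (uGS U)) \<rparr>"

definition exec :: "real \<Rightarrow> real \<Rightarrow> real \<Rightarrow> agent set \<Rightarrow> real \<Rightarrow> 'tr st \<Rightarrow> 'tr st" where
  "exec dclose dopen dmin M ct s =
     (let U = \<lparr> uDL = (\<Union>a\<in>M. uDL (upd_of dclose dopen dmin a ct s)),
                uDir = (\<Union>a\<in>M. uDir (upd_of dclose dopen dmin a ct s)),
                uGS = (\<Union>a\<in>M. uGS (upd_of dclose dopen dmin a ct s)) \<rparr>
      in if consistent U then apply_upd U s else s)"

definition changes :: "'tr upd \<Rightarrow> 'tr st \<Rightarrow> bool" where
  "changes U s \<longleftrightarrow>
     (\<exists>(x, v)\<in>uDL U. deadline s x \<noteq> v) \<or> (\<exists>d\<in>uDir U. dir s \<noteq> d) \<or> (\<exists>g\<in>uGS U. gatestatus s \<noteq> g)"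

definition enabled :: "real \<Rightarrow> real \<Rightarrow> real \<Rightarrow> agent \<Rightarrow> real \<Rightarrow> 'tr st \<Rightarrow> bool" where
  "enabled dclose dopen dmin a ct s \<longleftrightarrow>
     consistent (upd_of dclose dopen dmin a ct s) \<and> changes (upd_of dclose dopen dmin a ct s) s"

definition pre_run :: "(real \<Rightarrow> 'tr st) \<Rightarrow> bool" where
  "pre_run \<rho> \<longleftrightarrow>
     (\<forall>\<tau>>0. \<exists>ts :: real list. length ts \<ge> 2 \<and> ts ! 0 = 0 \<and> last ts = \<tau> \<and> sorted_wrt (<) ts
        \<and> (\<forall>i. Suc i < length ts \<longrightarrow> (\<exists>c. \<forall>u\<in>{ts ! i<..<ts ! Suc i}. \<rho> u = c)))"

definition rlim :: "(real \<Rightarrow> 'a) \<Rightarrow> real \<Rightarrow> 'a" where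
  "rlim \<rho> t = (THE c. \<exists>e>0. \<forall>u\<in>{t<..<t+e}. \<rho> u = c)"

definition llim :: "(real \<Rightarrow> 'a) \<Rightarrow> real \<Rightarrow> 'a" where
  "llim \<rho> t = (THE c. \<exists>e>0. \<forall>u\<in>{t-e<..<t}. \<rho> u = c)"

definition is_run :: "real \<Rightarrow> real \<Rightarrow> real \<Rightarrow> (real \<Rightarrow> 'tr st) \<Rightarrow> bool" where
  "is_run dclose dopen dmin \<rho> \<longleftrightarrow> pre_run \<rho>
   \<and> (\<forall>t\<ge>0. rlim \<rho> t \<noteq> \<rho> t \<longrightarrow>
        (\<exists>M. rlim \<rho> t = exec dclose dopen dmin M t (\<rho> t)
             \<and> trackstatus (rlim \<rho> t) = trackstatus (\<rho> t)))
   \<and> (\<forall>t>0. llim \<rho> t \<noteq> \<rho> t \<longrightarrow>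
        deadline (llim \<rho> t) = deadline (\<rho> t) \<and> dir (llim \<rho> t) = dir (\<rho> t)
        \<and> gatestatus (llim \<rho> t) = gatestatus (\<rho> t))"

definition fires :: "real \<Rightarrow> real \<Rightarrow> real \<Rightarrow> (real \<Rightarrow> 'tr st) \<Rightarrow> agent \<Rightarrow> real \<Rightarrow> bool" where
  "fires dclose dopen dmin \<rho> a t \<longleftrightarrow> rlim \<rho> t \<noteq> \<rho> t \<and>
     (\<exists>M. a \<in> M \<and> rlim \<rho> t = exec dclose dopen dmin M t (\<rho> t)
          \<and> trackstatus (rlim \<rho> t) = trackstatus (\<rho> t))"

definition immediate :: "real \<Rightarrow> real \<Rightarrow> real \<Rightarrow> (real \<Rightarrow> 'tr st) \<Rightarrow> agent \<Rightarrow> bool" where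
  "immediate dclose dopen dmin \<rho> a \<longleftrightarrow>
     (\<forall>t\<ge>0. enabled dclose dopen dmin a t (\<rho> t) \<longrightarrow> fires dclose dopen dmin \<rho> a t)"

definition bounded_agent :: "real \<Rightarrow> real \<Rightarrow> real \<Rightarrow> (real \<Rightarrow> 'tr st) \<Rightarrow> agent \<Rightarrow> bool" where
  "bounded_agent dclose dopen dmin \<rho> a \<longleftrightarrow> immediate dclose dopen dmin \<rho> a \<or>
     (\<exists>b>0. \<not> (\<exists>t\<ge>0. (\<forall>s\<in>{t<..<t+b}. enabled dclose dopen dmin a s (\<rho> s))
                      \<and> (\<forall>s\<in>{t<..<t+b}. \<not> fires dclose dopen dmin \<rho> a s)))"

definition initial_state :: "'tr st \<Rightarrow> bool" where
  "initial_state s \<longleftrightarrow> (\<forall>x. trackstatus s x = Empty \<and> deadline s x = PInf)"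

text \<open>Significant moments ts 0 < ts 1 < ... of track x; indices range over
  {i. enat i \<le> K}; K = \<infinity> means the sequence is infinite, K = enat k means
  the last element is ts k.\<close>
definition significant_moments ::
  "real \<Rightarrow> real \<Rightarrow> (real \<Rightarrow> 'tr st) \<Rightarrow> 'tr \<Rightarrow> (nat \<Rightarrow> real) \<Rightarrow> enat \<Rightarrow> bool" where
  "significant_moments dmin dmax \<rho> x ts K \<longleftrightarrow>
     ts 0 = 0
   \<and> (\<forall>i. enat (Suc i) \<le> K \<longrightarrow> ts i < ts (Suc i))
   \<and> (\<forall>i. enat (3*i+1) \<le> K \<longrightarrow>
        (\<forall>t\<in>{ts (3*i)..<ts (3*i+1)}. trackstatus (\<rho> t) x = Empty))
   \<and> (\<forall>i. enat (3*i+2) \<le> K \<longrightarrow>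
        (\<forall>t\<in>{ts (3*i+1)..<ts (3*i+2)}. trackstatus (\<rho> t) x = Coming)
        \<and> dmin \<le> ts (3*i+2) - ts (3*i+1) \<and> ts (3*i+2) - ts (3*i+1) \<le> dmax)
   \<and> (\<forall>i. enat (3*i+3) \<le> K \<longrightarrow>
        (\<forall>t\<in>{ts (3*i+2)..<ts (3*i+3)}. trackstatus (\<rho> t) x = Incrossing))
   \<and> (\<forall>k. K = enat k \<longrightarrow> 3 dvd k \<and> (\<forall>t\<ge>ts k. trackstatus (\<rho> t) x = Empty))"

definition regular_run ::
  "real \<Rightarrow> real \<Rightarrow> real \<Rightarrow> real \<Rightarrow> (real \<Rightarrow> ('tr::finite) st) \<Rightarrow> bool" where
  "regular_run dclose dopen dmin dmax \<rho> \<longleftrightarrow>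
     is_run dclose dopen dmin \<rho>
   \<and> initial_state (\<rho> 0)
   \<and> (\<forall>x. \<exists>ts K. significant_moments dmin dmax \<rho> x ts K)
   \<and> immediate dclose dopen dmin \<rho> Controller
   \<and> bounded_agent dclose dopen dmin \<rho> Gate
   \<and> \<not> (\<exists>t\<ge>0. \<forall>s\<in>{t<..<t+dclose}. dir (\<rho> s) = Close \<and> gatestatus (\<rho> s) = Opened)
   \<and> \<not> (\<exists>t\<ge>0. \<forall>s\<in>{t<..<t+dopen}. dir (\<rho> s) = Open \<and> gatestatus (\<rho> s) = Closed)"

end

theory Submission
  imports Defs
begin

abbreviation SM where "SM dmin dmax \<rho> x ts K \<equiv> significant_moments dmin dmax \<rho> x ts K"

lemma enat_Suc_le: "enat (Suc n) \<le> K \<Longrightarrow> enat n \<le> K"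
  by (meson Suc_ile_eq order_less_imp_le)

lemma enat_le_mono: "enat m \<le> K \<Longrightarrow> n \<le> m \<Longrightarrow> enat n \<le> K"
  by (meson enat_ord_simps(1) order_trans)

lemma sm_mono:
  assumes "SM dmin dmax \<rho> x ts K" "enat j \<le> K" "i < j"
  shows "ts i < ts j"
  using assms(2,3)
proof (induction j)
  case 0 then show ?case by simp
next
  case (Suc j)
  have j: "enat j \<le> K" using Suc.prems(1) by (rule enat_Suc_le)
  have "ts j < ts (Suc j)" using assms(1) Suc.prems(1) unfolding significant_moments_def by blast
  then show ?case using Suc.IH[OF j] Suc.prems(2) by (cases "i = j") auto
qed

lemma sm_le:
  assumes "SM dmin dmax \<rho> x ts K" "enat j \<le> K" "i \<le> j"
  shows "ts i \<le> ts j"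
  using sm_mono[OF assms(1,2)] assms(3) by (metis le_neq_implies_less less_imp_le order_refl)

lemma sm_0: "SM dmin dmax \<rho> x ts K \<Longrightarrow> ts 0 = 0"
  unfolding significant_moments_def by blast

lemma sm_nonneg:
  assumes "SM dmin dmax \<rho> x ts K" "enat j \<le> K"
  shows "0 \<le> ts j"
  using sm_le[OF assms, of 0] sm_0[OF assms(1)] by simp

lemma sm_K3:
  assumes "SM dmin dmax \<rho> x ts K" "enat (3*i+2) \<le> K"
  shows "enat (3*i+3) \<le> K"
proof (cases K)
  case (enat k)
  then have "3 dvd k" using assms(1) unfolding significant_moments_def by blast
  then obtain q where "k = 3*q" by blast
  moreover have "3*i+2 \<le> k" using assms(2) enat by simp
  ultimately have "3*i+3 \<le> k" by presburger
  then show ?thesis using enat by simp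
qed simp

lemma sm_coming:
  assumes "SM dmin dmax \<rho> x ts K" "enat (3*i+2) \<le> K"
  shows "dmin \<le> ts (3*i+2) - ts (3*i+1)" "ts (3*i+2) - ts (3*i+1) \<le> dmax"
  using assms unfolding significant_moments_def by blast+

lemma sm_unb:
  assumes "SM dmin dmax \<rho> x ts K" "K = \<infinity>" "0 < dmin"
  shows "\<exists>n. t < ts n"
proof -
  have key: "real j * dmin \<le> ts (3*j+1)" for j
  proof (induction j)
    case 0
    have "ts 0 < ts 1" using sm_mono[OF assms(1), of 1 0] assms(2) by simp
    then show ?case using sm_0[OF assms(1)] by simp
  next
    case (Suc j)
    have "dmin \<le> ts (3*j+2) - ts (3*j+1)" using sm_coming[OF assms(1)] assms(2) by simp
    moreover have "ts (3*j+2) < ts (3*Suc j+1)" using sm_mono[OF assms(1), of "3*Suc j+1" "3*j+2"] assms(2) by simp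
    ultimately show ?case using Suc.IH by (simp add: algebra_simps)
  qed
  obtain j where "t < real j * dmin" using ex_less_of_nat_mult[OF assms(3)] by blast
  then show ?thesis using key[of j] by (intro exI[of _ "3*j+1"]) linarith
qed

lemma step_ex:
  fixes P :: "nat \<Rightarrow> bool"
  shows "P 0 \<Longrightarrow> \<not> P n \<Longrightarrow> \<exists>i<n. P i \<and> \<not> P (Suc i)"
proof (induction n)
  case 0 then show ?case by simp
next
  case (Suc n)
  then show ?case by (cases "P n") (auto intro: less_SucI)
qed

lemma cover_oc:
  assumes "SM dmin dmax \<rho> x ts K" "0 < dmin" "0 < t"
  shows "(\<exists>n. enat (Suc n) \<le> K \<and> ts n < t \<and> t \<le> ts (Suc n)) \<or> (\<exists>k. K = enat k \<and> ts k < t)"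
proof (cases "\<exists>k. K = enat k \<and> ts k < t")
  case False
  have "\<exists>m. enat m \<le> K \<and> t \<le> ts m"
  proof (cases K)
    case (enat k) then show ?thesis using False by force
  next
    case infinity
    then obtain n where "t < ts n" using sm_unb[OF assms(1) _ assms(2), of t] by blast
    then show ?thesis using infinity by (intro exI[of _ n]) auto
  qed
  then obtain m where m: "enat m \<le> K" "t \<le> ts m" by blast
  obtain i where "i < m" "ts i < t" "\<not> ts (Suc i) < t"
    using step_ex[of "\<lambda>i. ts i < t" m] m sm_0[OF assms(1)] assms(3) by auto
  then have "enat (Suc i) \<le> K \<and> ts i < t \<and> t \<le> ts (Suc i)"
    using enat_le_mono[OF m(1), of "Suc i"] by auto
  then show ?thesis by blast
qed blast

lemma cover_co:
  assumes "SM dmin dmax \<rho> x ts K" "0 < dmin" "0 \<le> t"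
  shows "(\<exists>n. enat (Suc n) \<le> K \<and> ts n \<le> t \<and> t < ts (Suc n)) \<or> (\<exists>k. K = enat k \<and> ts k \<le> t)"
proof (cases "\<exists>k. K = enat k \<and> ts k \<le> t")
  case False
  have "\<exists>m. enat m \<le> K \<and> t < ts m"
  proof (cases K)
    case (enat k) then show ?thesis using False by force
  next
    case infinity
    then obtain n where "t < ts n" using sm_unb[OF assms(1) _ assms(2), of t] by blast
    then show ?thesis using infinity by (intro exI[of _ n]) auto
  qed
  then obtain m where m: "enat m \<le> K" "t < ts m" by blast
  obtain i where "i < m" "ts i \<le> t" "\<not> ts (Suc i) \<le> t"
    using step_ex[of "\<lambda>i. ts i \<le> t" m] m sm_0[OF assms(1)] assms(3) by auto
  then have "enat (Suc i) \<le> K \<and> ts i \<le> t \<and> t < ts (Suc i)"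
    using enat_le_mono[OF m(1), of "Suc i"] by auto
  then show ?thesis by blast
qed blast

lemma st_phase:
  assumes "SM dmin dmax \<rho> x ts K" "enat (Suc n) \<le> K" "ts n \<le> t" "t < ts (Suc n)"
  shows "trackstatus (\<rho> t) x = (if n mod 3 = 0 then Empty else if n mod 3 = 1 then Coming else Incrossing)"
proof -
  define q where "q = n div 3"
  have n: "n = 3*q + n mod 3" unfolding q_def by simp
  consider "n mod 3 = 0" | "n mod 3 = 1" | "n mod 3 = 2" by linarith
  then show ?thesis
  proof cases
    case 1
    then have e: "n = 3*q" "Suc n = 3*q+1" using n by simp_all
    have "enat (3*q+1) \<le> K" "t \<in> {ts (3*q)..<ts (3*q+1)}" using assms(2,3,4) unfolding e(1)[symmetric] e(2)[symmetric] by auto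
    then have "trackstatus (\<rho> t) x = Empty" using assms(1) unfolding significant_moments_def by blast
    then show ?thesis using 1 by simp
  next
    case 2
    then have e: "n = 3*q+1" "Suc n = 3*q+2" using n by simp_all
    have "enat (3*q+2) \<le> K" "t \<in> {ts (3*q+1)..<ts (3*q+2)}" using assms(2,3,4) unfolding e(1)[symmetric] e(2)[symmetric] by auto
    then have "trackstatus (\<rho> t) x = Coming" using assms(1) unfolding significant_moments_def by blast
    then show ?thesis using 2 by simp
  next
    case 3
    then have e: "n = 3*q+2" "Suc n = 3*q+3" using n by simp_all
    have "enat (3*q+3) \<le> K" "t \<in> {ts (3*q+2)..<ts (3*q+3)}" using assms(2,3,4) unfolding e(1)[symmetric] e(2)[symmetric] by auto
    then have "trackstatus (\<rho> t) x = Incrossing" using assms(1) unfolding significant_moments_def by blast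
    then show ?thesis using 3 by simp
  qed
qed

lemma st_tail:
  assumes "SM dmin dmax \<rho> x ts K" "K = enat k" "ts k \<le> t"
  shows "trackstatus (\<rho> t) x = Empty"
  using assms unfolding significant_moments_def by blast

definition dval :: "real \<Rightarrow> (nat \<Rightarrow> real) \<Rightarrow> nat \<Rightarrow> xreal" where
  "dval w ts n = (if n mod 3 = 0 then PInf else Fin (ts (3*(n div 3)+1) + w))"

definition phase :: "(nat \<Rightarrow> real) \<Rightarrow> enat \<Rightarrow> real \<Rightarrow> nat \<Rightarrow> bool" where
  "phase ts K t n \<longleftrightarrow> enat (Suc n) \<le> K \<and> ts n < t \<and> t \<le> ts (Suc n)"

definition Dl :: "real \<Rightarrow> (nat \<Rightarrow> real) \<Rightarrow> enat \<Rightarrow> real \<Rightarrow> xreal" where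
  "Dl w ts K t = (if \<exists>n. phase ts K t n then dval w ts (THE n. phase ts K t n) else PInf)"

lemma phase_lt:
  assumes "SM dmin dmax \<rho> x ts K" "phase ts K t n" "phase ts K t m"
  shows "\<not> m < n"
proof
  assume "m < n"
  then have "ts (Suc m) \<le> ts n"
    using sm_le[OF assms(1), of n "Suc m"] assms(2) enat_Suc_le unfolding phase_def by auto
  then show False using assms(2,3) unfolding phase_def by auto
qed

lemma Dl_eq:
  assumes "SM dmin dmax \<rho> x ts K" "phase ts K t n"
  shows "Dl w ts K t = dval w ts n"
proof -
  have "(THE n. phase ts K t n) = n"
    using phase_lt[OF assms(1)] assms(2) by (intro the_equality) (auto, meson linorder_neqE_nat)
  then show ?thesis using assms(2) unfolding Dl_def by auto
qed

lemma Dl_none: "\<not> (\<exists>n. phase ts K t n) \<Longrightarrow> Dl w ts K t = PInf"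
  unfolding Dl_def by auto

lemma no_phase_tail:
  assumes "SM dmin dmax \<rho> x ts K" "K = enat k" "ts k < t"
  shows "\<not> phase ts K t n"
proof
  assume p: "phase ts K t n"
  then have "ts (Suc n) \<le> ts k" using sm_le[OF assms(1), of k "Suc n"] assms(2) unfolding phase_def by auto
  then show False using p assms(3) unfolding phase_def by auto
qed

lemma no_phase_0:
  assumes "SM dmin dmax \<rho> x ts K" "t \<le> 0"
  shows "\<not> phase ts K t n"
  using sm_nonneg[OF assms(1), of n] enat_Suc_le assms(2) unfolding phase_def by force

lemma Dl_left:
  assumes "SM dmin dmax \<rho> x ts K" "0 < dmin" "0 < t"
  shows "\<exists>e>0. \<forall>v. t - e < v \<and> v < t \<longrightarrow> Dl w ts K v = Dl w ts K t"
  using cover_oc[OF assms]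
proof
  assume "\<exists>n. enat (Suc n) \<le> K \<and> ts n < t \<and> t \<le> ts (Suc n)"
  then obtain n where n: "phase ts K t n" unfolding phase_def by blast
  have "\<forall>v. t - (t - ts n) < v \<and> v < t \<longrightarrow> Dl w ts K v = Dl w ts K t"
  proof (intro allI impI)
    fix v assume "t - (t - ts n) < v \<and> v < t"
    then have "phase ts K v n" using n unfolding phase_def by auto
    then show "Dl w ts K v = Dl w ts K t" using Dl_eq[OF assms(1)] n by simp
  qed
  then show ?thesis using n unfolding phase_def by (intro exI[of _ "t - ts n"]) auto
next
  assume "\<exists>k. K = enat k \<and> ts k < t"
  then obtain k where k: "K = enat k" "ts k < t" by blast
  have "\<forall>v. t - (t - ts k) < v \<and> v < t \<longrightarrow> Dl w ts K v = Dl w ts K t"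
  proof (intro allI impI)
    fix v assume "t - (t - ts k) < v \<and> v < t"
    then show "Dl w ts K v = Dl w ts K t" using Dl_none no_phase_tail[OF assms(1) k(1)] k(2) by auto
  qed
  then show ?thesis using k by (intro exI[of _ "t - ts k"]) auto
qed

definition newdl :: "real \<Rightarrow> real \<Rightarrow> 'tr st \<Rightarrow> 'tr \<Rightarrow> xreal" where
  "newdl w ct s y = (if trackstatus s y = Coming \<and> deadline s y = PInf then Fin (ct + w)
     else if trackstatus s y = Empty \<and> xlt (deadline s y) PInf then PInf else deadline s y)"

lemma newdl_empty: "trackstatus s y = Empty \<Longrightarrow> newdl w ct s y = PInf"
  unfolding newdl_def by (cases "deadline s y") auto

lemma right_step:
  assumes "SM dmin dmax \<rho> y ts K" "0 < dmin" "0 < w" "0 \<le> u"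
    and dl: "deadline (\<rho> u) y = Dl w ts K u"
  shows "\<exists>e>0. \<forall>v. u < v \<and> v < u + e \<longrightarrow> Dl w ts K v = newdl w u (\<rho> u) y"
  using cover_co[OF assms(1,2,4)]
proof
  assume "\<exists>n. enat (Suc n) \<le> K \<and> ts n \<le> u \<and> u < ts (Suc n)"
  then obtain n where n: "enat (Suc n) \<le> K" "ts n \<le> u" "u < ts (Suc n)" by blast
  have st: "trackstatus (\<rho> u) y = (if n mod 3 = 0 then Empty else if n mod 3 = 1 then Coming else Incrossing)"
    using st_phase[OF assms(1) n] .
  have nd: "newdl w u (\<rho> u) y = dval w ts n"
  proof -
    consider "n mod 3 = 0" | "n mod 3 = 1" | "n mod 3 = 2" by linarith
    then show ?thesis
    proof cases
      case 1
      then show ?thesis using st newdl_empty by (simp add: dval_def)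
    next
      case 2
      then obtain m where m: "n = Suc m" by (cases n) auto
      show ?thesis
      proof (cases "u = ts n")
        case True
        have "phase ts K u m" unfolding phase_def using True m n(1) sm_mono[OF assms(1), of n m] enat_Suc_le
          by auto
        then have "Dl w ts K u = dval w ts m" using Dl_eq[OF assms(1)] by blast
        moreover have "m mod 3 = 0" using 2 m by presburger
        moreover have "3*(n div 3)+1 = n" using 2 by presburger
        ultimately show ?thesis using st 2 dl True unfolding newdl_def dval_def by simp
      next
        case False
        then have "phase ts K u n" unfolding phase_def using n by auto
        then have "Dl w ts K u = dval w ts n" using Dl_eq[OF assms(1)] by blast
        then show ?thesis using st 2 dl unfolding newdl_def dval_def by simp
      qed
    next
      case 3
      then obtain m where m: "n = Suc m" by (cases n) auto
      show ?thesis
      proof (cases "u = ts n")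
        case True
        have "phase ts K u m" unfolding phase_def using True m n(1) sm_mono[OF assms(1), of n m] enat_Suc_le
          by auto
        then have "Dl w ts K u = dval w ts m" using Dl_eq[OF assms(1)] by blast
        moreover have "m mod 3 = 1" using 3 m by presburger
        moreover have "m div 3 = n div 3" using 3 m by presburger
        ultimately show ?thesis using st 3 dl unfolding newdl_def dval_def by simp
      next
        case False
        then have "phase ts K u n" unfolding phase_def using n by auto
        then have "Dl w ts K u = dval w ts n" using Dl_eq[OF assms(1)] by blast
        then show ?thesis using st 3 dl unfolding newdl_def dval_def by simp
      qed
    qed
  qed
  have "\<forall>v. u < v \<and> v < u + (ts (Suc n) - u) \<longrightarrow> Dl w ts K v = newdl w u (\<rho> u) y"
  proof (intro allI impI)
    fix v assume "u < v \<and> v < u + (ts (Suc n) - u)"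
    then have "phase ts K v n" using n unfolding phase_def by auto
    then show "Dl w ts K v = newdl w u (\<rho> u) y" using Dl_eq[OF assms(1)] nd by simp
  qed
  then show ?thesis using n by (intro exI[of _ "ts (Suc n) - u"]) auto
next
  assume "\<exists>k. K = enat k \<and> ts k \<le> u"
  then obtain k where k: "K = enat k" "ts k \<le> u" by blast
  have "newdl w u (\<rho> u) y = PInf" by (rule newdl_empty[OF st_tail[OF assms(1) k]])
  moreover have "\<forall>v. u < v \<and> v < u + 1 \<longrightarrow> Dl w ts K v = PInf"
    using Dl_none no_phase_tail[OF assms(1) k(1)] k(2) by force
  ultimately show ?thesis by (intro exI[of _ 1]) auto
qed

lemma fin_coming:
  assumes "SM dmin dmax \<rho> y ts K" "0 < w" "w < dmin"
    and dl: "deadline (\<rho> u) y = Dl w ts K u" "deadline (\<rho> u) y = Fin u"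
  shows "trackstatus (\<rho> u) y = Coming"
proof -
  obtain n where n: "phase ts K u n" using dl Dl_none by fastforce
  have d: "dval w ts n = Fin u" using Dl_eq[OF assms(1) n] dl by simp
  define q where "q = n div 3"
  have nm: "n mod 3 \<noteq> 0" using d unfolding dval_def by (cases "n mod 3 = 0") auto
  have u: "u = ts (3*q+1) + w" using d nm unfolding dval_def q_def by auto
  have K2: "enat (3*q+2) \<le> K"
  proof (cases "n mod 3 = 1")
    case True
    then have "Suc n = 3*q+2" unfolding q_def by presburger
    then show ?thesis using n unfolding phase_def by metis
  next
    case False
    then have "n = 3*q+2" using nm unfolding q_def by presburger
    then show ?thesis using n enat_Suc_le unfolding phase_def by metis
  qed
  have "dmin \<le> ts (3*q+2) - ts (3*q+1)" using sm_coming[OF assms(1) K2] by blast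
  then have "ts (3*q+1) \<le> u" "u < ts (Suc (3*q+1))" using u assms(2,3) by auto
  moreover have "enat (Suc (3*q+1)) \<le> K" using K2 by simp
  ultimately show ?thesis using st_phase[OF assms(1), of "3*q+1" u] by simp
qed

lemma upd_split:
  "uDL (upd_of dc dop dm a ct s) = (if a = Controller then uDL (upd_ctrl dc dop dm ct s) else {})"
  "uDir (upd_of dc dop dm a ct s) = (if a = Controller then uDir (upd_ctrl dc dop dm ct s) else {})"
  "uGS (upd_of dc dop dm a ct s) = (if a = Gate then uGS (upd_gate s) else {})"
  apply (cases a, simp_all add: upd_of_def upd_gate_def)
  apply (cases a, simp_all add: upd_of_def upd_gate_def)
  apply (cases a, simp_all add: upd_of_def upd_gate_def upd_ctrl_def)
  done

lemma mem_uDL: "(y, a) \<in> uDL (upd_ctrl dc dop dm ct s) \<longleftrightarrow>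
   (trackstatus s y = Coming \<and> deadline s y = PInf \<and> a = Fin (ct + W dc dm))
 \<or> (trackstatus s y = Empty \<and> xlt (deadline s y) PInf \<and> a = PInf)"
  by (simp add: upd_ctrl_def)

lemma ctrl_consistent:
  assumes "0 < dop" "\<forall>y. deadline s y = Fin ct \<longrightarrow> trackstatus s y = Coming"
  shows "consistent (upd_ctrl dc dop dm ct s)"
proof -
  have A: "\<not> ((\<exists>x. deadline s x = Fin ct) \<and> safe_to_open dop ct s)"
  proof
    assume "(\<exists>x. deadline s x = Fin ct) \<and> safe_to_open dop ct s"
    then obtain x where x: "deadline s x = Fin ct" "safe_to_open dop ct s" by blast
    then have "trackstatus s x = Coming" using assms(2) by blast
    moreover from x(2) have "trackstatus s x = Empty \<or> xlt (Fin (ct + dop)) (deadline s x)"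
      unfolding safe_to_open_def by blast
    ultimately have "xlt (Fin (ct + dop)) (Fin ct)" using x(1) by auto
    then show False using assms(1) by simp
  qed
  show ?thesis unfolding consistent_def upd_ctrl_def using A by auto
qed

lemma dl_upd:
  "(if \<exists>a. (y, a) \<in> uDL (upd_ctrl dc dop dm ct s) then THE a. (y, a) \<in> uDL (upd_ctrl dc dop dm ct s)
    else deadline s y) = newdl (W dc dm) ct s y"
  unfolding mem_uDL newdl_def
  by (cases "trackstatus s y"; cases "deadline s y"; simp)

lemma exec_ctrl:
  assumes "consistent (upd_ctrl dc dop dm ct s)" "Controller \<in> M"
  shows "deadline (exec dc dop dm M ct s) y = newdl (W dc dm) ct s y"
proof -
  have e1: "(\<Union>a\<in>M. uDL (upd_of dc dop dm a ct s)) = uDL (upd_ctrl dc dop dm ct s)"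
    using assms(2) by (auto simp: upd_split split: if_splits)
  have e2: "(\<Union>a\<in>M. uDir (upd_of dc dop dm a ct s)) = uDir (upd_ctrl dc dop dm ct s)"
    using assms(2) by (auto simp: upd_split split: if_splits)
  have e3: "(\<Union>a\<in>M. uGS (upd_of dc dop dm a ct s)) \<subseteq> uGS (upd_gate s)"
    by (auto simp: upd_split split: if_splits)
  have g: "\<forall>g\<in>uGS (upd_gate s). \<forall>h\<in>uGS (upd_gate s). g = h"
    unfolding upd_gate_def by auto
  have c: "consistent \<lparr>uDL = (\<Union>a\<in>M. uDL (upd_of dc dop dm a ct s)),
                uDir = (\<Union>a\<in>M. uDir (upd_of dc dop dm a ct s)),
                uGS = (\<Union>a\<in>M. uGS (upd_of dc dop dm a ct s))\<rparr>"
    using assms(1) e3 g unfolding consistent_def e1 e2 by (simp add: subset_iff)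
  have "deadline (exec dc dop dm M ct s) y = (if \<exists>a. (y, a) \<in> uDL (upd_ctrl dc dop dm ct s) then THE a. (y, a) \<in> uDL (upd_ctrl dc dop dm ct s)
    else deadline s y)"
    unfolding exec_def Let_def using c by (simp add: apply_upd_def e1 cong: if_cong split del: if_split)
  then show ?thesis using dl_upd by metis
qed

lemma exec_noctrl:
  assumes "Controller \<notin> M"
  shows "deadline (exec dc dop dm M ct s) y = deadline s y"
proof -
  have e1: "(\<Union>a\<in>M. uDL (upd_of dc dop dm a ct s)) = {}"
    using assms by (auto simp: upd_split split: if_splits)
  show ?thesis unfolding exec_def Let_def by (simp add: apply_upd_def e1)
qed

lemma nochange:
  assumes "\<not> changes (upd_ctrl dc dop dm ct s) s"
  shows "newdl (W dc dm) ct s y = deadline s y"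
proof -
  have H0: "\<not> (\<exists>(x, v)\<in>uDL (upd_ctrl dc dop dm ct s). deadline s x \<noteq> v)"
    using assms unfolding changes_def by blast
  have H: "\<And>v. (y,v) \<in> uDL (upd_ctrl dc dop dm ct s) \<Longrightarrow> deadline s y = v"
  proof -
    fix v assume "(y,v) \<in> uDL (upd_ctrl dc dop dm ct s)"
    then show "deadline s y = v" using H0 by (auto simp: Bex_def)
  qed
  show ?thesis unfolding newdl_def using H[of "Fin (ct + W dc dm)"] H[of PInf] unfolding mem_uDL
    by (cases "trackstatus s y"; cases "deadline s y"; simp)
qed

lemma rlim_dl:
  assumes "is_run dc dop dm \<rho>" "immediate dc dop dm \<rho> Controller" "0 \<le> u"
    and c: "consistent (upd_ctrl dc dop dm u (\<rho> u))"
  shows "deadline (rlim \<rho> u) y = newdl (W dc dm) u (\<rho> u) y"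
proof (cases "enabled dc dop dm Controller u (\<rho> u)")
  case True
  then have "fires dc dop dm \<rho> Controller u" using assms(2,3) unfolding immediate_def by blast
  then obtain M where "Controller \<in> M" "rlim \<rho> u = exec dc dop dm M u (\<rho> u)"
    unfolding fires_def by blast
  then show ?thesis using exec_ctrl[OF c] by simp
next
  case False
  then have nc: "newdl (W dc dm) u (\<rho> u) y = deadline (\<rho> u) y"
    using c nochange unfolding enabled_def upd_of_def by fastforce
  show ?thesis
  proof (cases "rlim \<rho> u = \<rho> u")
    case True then show ?thesis using nc by simp
  next
    case False
    then obtain M where M: "rlim \<rho> u = exec dc dop dm M u (\<rho> u)"
      using assms(1,3) unfolding is_run_def by blast
    show ?thesis
    proof (cases "Controller \<in> M")
      case True then show ?thesis using exec_ctrl[OF c] M by simp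
    next
      case False then show ?thesis using exec_noctrl M nc by simp
    qed
  qed
qed

lemma rlim_eq:
  assumes "0 < e" "\<forall>v. t < v \<and> v < t + e \<longrightarrow> \<rho> v = c"
  shows "rlim \<rho> t = c"
  unfolding rlim_def
proof (rule the_equality)
  show "\<exists>e>0. \<forall>u\<in>{t<..<t + e}. \<rho> u = c" using assms by auto
next
  fix c' assume "\<exists>e>0. \<forall>u\<in>{t<..<t + e}. \<rho> u = c'"
  then obtain e' where e': "e' > 0" "\<forall>u\<in>{t<..<t + e'}. \<rho> u = c'" by blast
  define v where "v = t + min e e' / 2"
  have "t < v" "v < t + e" "v < t + e'" using assms(1) e'(1) unfolding v_def by auto
  then have "\<rho> v = c" "\<rho> v = c'" using assms(2) e'(2) by auto
  then show "c' = c" by simp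
qed

lemma llim_eq:
  assumes "0 < e" "\<forall>v. t - e < v \<and> v < t \<longrightarrow> \<rho> v = c"
  shows "llim \<rho> t = c"
  unfolding llim_def
proof (rule the_equality)
  show "\<exists>e>0. \<forall>u\<in>{t - e<..<t}. \<rho> u = c" using assms by auto
next
  fix c' assume "\<exists>e>0. \<forall>u\<in>{t - e<..<t}. \<rho> u = c'"
  then obtain e' where e': "e' > 0" "\<forall>u\<in>{t - e'<..<t}. \<rho> u = c'" by blast
  define v where "v = t - min e e' / 2"
  have "t > v" "v > t - e" "v > t - e'" using assms(1) e'(1) unfolding v_def by auto
  then have "\<rho> v = c" "\<rho> v = c'" using assms(2) e'(2) by auto
  then show "c' = c" by simp
qed

lemma const_right:
  assumes "pre_run \<rho>" "0 \<le> t"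
  shows "\<exists>b>t. \<forall>v. t < v \<and> v < b \<longrightarrow> \<rho> v = rlim \<rho> t"
proof -
  obtain L :: "real list" where L: "length L \<ge> 2" "L ! 0 = 0" "last L = t + 1"
    "\<forall>i. Suc i < length L \<longrightarrow> (\<exists>c. \<forall>u\<in>{L ! i<..<L ! Suc i}. \<rho> u = c)"
    using assms(1) assms(2) unfolding pre_run_def by (metis add_nonneg_pos zero_less_one)
  have "L \<noteq> []" using L(1) by auto
  then have "L ! (length L - 1) = t + 1" using last_conv_nth[of L] L(3) by simp
  then obtain i where i: "i < length L - 1" "L ! i \<le> t" "\<not> L ! Suc i \<le> t"
    using step_ex[of "\<lambda>i. L ! i \<le> t" "length L - 1"] L(2) assms(2) by auto
  have "Suc i < length L" using i(1) by linarith
  then obtain c where c: "\<forall>u\<in>{L ! i<..<L ! Suc i}. \<rho> u = c" using L(4) by blast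
  have cc: "\<forall>v. t < v \<and> v < t + (L ! Suc i - t) \<longrightarrow> \<rho> v = c" using c i by auto
  have "rlim \<rho> t = c" using rlim_eq[OF _ cc] i(3) by auto
  then show ?thesis using cc i(3) by (intro exI[of _ "L ! Suc i"]) auto
qed

lemma const_left:
  assumes "pre_run \<rho>" "0 < t"
  shows "\<exists>a<t. \<forall>v. a < v \<and> v < t \<longrightarrow> \<rho> v = llim \<rho> t"
proof -
  obtain L :: "real list" where L: "length L \<ge> 2" "L ! 0 = 0" "last L = t"
    "\<forall>i. Suc i < length L \<longrightarrow> (\<exists>c. \<forall>u\<in>{L ! i<..<L ! Suc i}. \<rho> u = c)"
    using assms(1) assms(2) unfolding pre_run_def by metis
  have "L \<noteq> []" using L(1) by auto
  then have "L ! (length L - 1) = t" using last_conv_nth[of L] L(3) by simp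
  then obtain i where i: "i < length L - 1" "L ! i < t" "\<not> L ! Suc i < t"
    using step_ex[of "\<lambda>i. L ! i < t" "length L - 1"] L(2) assms(2) by auto
  have "Suc i < length L" using i(1) by linarith
  then obtain c where c: "\<forall>u\<in>{L ! i<..<L ! Suc i}. \<rho> u = c" using L(4) by blast
  have cc: "\<forall>v. t - (t - L ! i) < v \<and> v < t \<longrightarrow> \<rho> v = c" using c i by auto
  have "llim \<rho> t = c" using llim_eq[OF _ cc] i(2) by auto
  then show ?thesis using cc i(2) by (intro exI[of _ "L ! i"]) auto
qed

lemma real_induct0:
  fixes P :: "real \<Rightarrow> bool"
  assumes left: "\<And>u. 0 \<le> u \<Longrightarrow> (\<forall>v. 0 \<le> v \<and> v < u \<longrightarrow> P v) \<Longrightarrow> P u"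
    and right: "\<And>u. 0 \<le> u \<Longrightarrow> (\<forall>v. 0 \<le> v \<and> v \<le> u \<longrightarrow> P v) \<Longrightarrow> \<exists>e>0. \<forall>v. u < v \<and> v < u + e \<longrightarrow> P v"
    and "0 \<le> u"
  shows "P u"
proof (rule ccontr)
  assume "\<not> P u"
  define S where "S = {v. 0 \<le> v \<and> \<not> P v}"
  have ne: "S \<noteq> {}" using \<open>\<not> P u\<close> assms(3) unfolding S_def by auto
  have bb: "bdd_below S" unfolding S_def by (rule bdd_belowI[of _ 0]) auto
  define m where "m = Inf S"
  have m0: "0 \<le> m" unfolding m_def using ne by (rule cInf_greatest) (auto simp: S_def)
  have below: "\<forall>v. 0 \<le> v \<and> v < m \<longrightarrow> P v"
  proof (intro allI impI)
    fix v assume v: "0 \<le> v \<and> v < m"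
    show "P v"
    proof (rule ccontr)
      assume "\<not> P v"
      then have "v \<in> S" using v unfolding S_def by auto
      then have "m \<le> v" unfolding m_def using bb by (rule cInf_lower)
      then show False using v by simp
    qed
  qed
  have Pm: "P m" using left[OF m0 below] .
  then have "\<forall>v. 0 \<le> v \<and> v \<le> m \<longrightarrow> P v" using below by (metis order_le_less)
  then obtain e where e: "e > 0" "\<forall>v. m < v \<and> v < m + e \<longrightarrow> P v" using right[OF m0] by blast
  have "m + e \<le> Inf S"
  proof (rule cInf_greatest[OF ne])
    fix v assume v: "v \<in> S"
    then have "m \<le> v" unfolding m_def using bb by (rule cInf_lower)
    moreover have "v \<noteq> m" using v Pm unfolding S_def by auto
    moreover have "\<not> P v" using v unfolding S_def by auto
    ultimately show "m + e \<le> v" using e by force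
  qed
  then show False using e(1) unfolding m_def by simp
qed

lemma invariant:
  fixes \<rho> :: "real \<Rightarrow> ('tr::finite) st"
  assumes rr: "regular_run dc dop dm dx \<rho>" and "0 < dc" "0 < dop" "dc < dm"
    and sm: "\<forall>y. SM dm dx \<rho> y (tsf y) (Kf y)"
    and "0 \<le> u"
  shows "\<forall>y. deadline (\<rho> u) y = Dl (W dc dm) (tsf y) (Kf y) u"
proof -
  let ?w = "W dc dm"
  have w: "0 < ?w" "?w < dm" using assms unfolding W_def by auto
  have dm0: "0 < dm" using assms by linarith
  have run: "is_run dc dop dm \<rho>" and init: "initial_state (\<rho> 0)"
    and imm: "immediate dc dop dm \<rho> Controller"
    using rr unfolding regular_run_def by auto
  have pre: "pre_run \<rho>" using run unfolding is_run_def by auto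
  show ?thesis
  proof (rule real_induct0[where P="\<lambda>u. \<forall>y. deadline (\<rho> u) y = Dl ?w (tsf y) (Kf y) u"])
    fix u :: real assume u0: "0 \<le> u"
      and IH: "\<forall>v. 0 \<le> v \<and> v < u \<longrightarrow> (\<forall>y. deadline (\<rho> v) y = Dl ?w (tsf y) (Kf y) v)"
    show "\<forall>y. deadline (\<rho> u) y = Dl ?w (tsf y) (Kf y) u"
    proof
      fix y
      show "deadline (\<rho> u) y = Dl ?w (tsf y) (Kf y) u"
      proof (cases "u = 0")
        case True
        then show ?thesis using init Dl_none no_phase_0[OF sm[rule_format, of y]]
          unfolding initial_state_def by auto
      next
        case False
        then have up: "0 < u" using u0 by simp
        obtain a where a: "a < u" "\<forall>v. a < v \<and> v < u \<longrightarrow> \<rho> v = llim \<rho> u"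
          using const_left[OF pre up] by blast
        obtain e where e: "e > 0" "\<forall>v. u - e < v \<and> v < u \<longrightarrow> Dl ?w (tsf y) (Kf y) v = Dl ?w (tsf y) (Kf y) u"
          using Dl_left[OF sm[rule_format, of y] dm0 up] by blast
        define m where "m = max (max a (u - e)) 0"
        define v where "v = (m + u) / 2"
        have m: "m < u" "a \<le> m" "u - e \<le> m" "0 \<le> m" unfolding m_def using a e up by auto
        have v: "m < v" "v < u" unfolding v_def using m by auto
        have "deadline (llim \<rho> u) = deadline (\<rho> u)" using run up unfolding is_run_def by metis
        moreover have "\<rho> v = llim \<rho> u" using a v m by auto
        moreover have "deadline (\<rho> v) y = Dl ?w (tsf y) (Kf y) v" using IH v m by auto
        moreover have "Dl ?w (tsf y) (Kf y) v = Dl ?w (tsf y) (Kf y) u" using e v m by auto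
        ultimately show ?thesis by metis
      qed
    qed
  next
    fix u :: real assume u0: "0 \<le> u"
      and IH: "\<forall>v. 0 \<le> v \<and> v \<le> u \<longrightarrow> (\<forall>y. deadline (\<rho> v) y = Dl ?w (tsf y) (Kf y) v)"
    have cur: "\<forall>y. deadline (\<rho> u) y = Dl ?w (tsf y) (Kf y) u" using IH u0 by auto
    have "\<forall>y. deadline (\<rho> u) y = Fin u \<longrightarrow> trackstatus (\<rho> u) y = Coming"
      using fin_coming[OF sm[rule_format] w cur[rule_format]] by blast
    then have cons: "consistent (upd_ctrl dc dop dm u (\<rho> u))"
      using ctrl_consistent[OF assms(3)] by blast
    have rl: "deadline (rlim \<rho> u) y = newdl ?w u (\<rho> u) y" for y
      using rlim_dl[OF run imm u0 cons] .
    have ev1: "eventually (\<lambda>v. Dl ?w (tsf y) (Kf y) v = newdl ?w u (\<rho> u) y) (at_right u)" for y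
    proof -
      obtain e where "e > 0" "\<forall>v. u < v \<and> v < u + e \<longrightarrow> Dl ?w (tsf y) (Kf y) v = newdl ?w u (\<rho> u) y"
        using right_step[OF sm[rule_format, of y] dm0 w(1) u0 cur[rule_format, of y]] by blast
      then show ?thesis unfolding eventually_at_right_field by (intro exI[of _ "u+e"]) auto
    qed
    have ev: "eventually (\<lambda>v. \<forall>y. Dl ?w (tsf y) (Kf y) v = newdl ?w u (\<rho> u) y) (at_right u)"
      by (rule eventually_all_finite) (rule ev1)
    obtain b where b: "b > u" "\<forall>v. u < v \<and> v < b \<longrightarrow> \<rho> v = rlim \<rho> u"
      using const_right[OF pre u0] by blast
    have ev2: "eventually (\<lambda>v. \<rho> v = rlim \<rho> u) (at_right u)"
      unfolding eventually_at_right_field using b by blast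
    obtain b' where b': "b' > u" "\<forall>v>u. v < b' \<longrightarrow> (\<forall>y. Dl ?w (tsf y) (Kf y) v = newdl ?w u (\<rho> u) y) \<and> \<rho> v = rlim \<rho> u"
      using eventually_conj[OF ev ev2] unfolding eventually_at_right_field by blast
    show "\<exists>e>0. \<forall>v. u < v \<and> v < u + e \<longrightarrow> (\<forall>y. deadline (\<rho> v) y = Dl ?w (tsf y) (Kf y) v)"
      using b' rl by (intro exI[of _ "b' - u"]) auto
  qed (rule assms(6))
qed

theorem mainTheorem3:
  fixes dclose dopen dmin dmax :: real
    and \<rho> :: "real \<Rightarrow> ('tr::finite) st"
    and x :: 'tr and ts :: "nat \<Rightarrow> real" and K :: enat
  assumes "0 < dclose" "0 < dopen" "0 < dmin" "0 < dmax"
    and "dclose < dmin" "dmin \<le> dmax"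
    and "regular_run dclose dopen dmin dmax \<rho>"
    and "significant_moments dmin dmax \<rho> x ts K"
  shows "(deadline (\<rho> 0) x = PInf
       \<and> (\<forall>i. enat (3*i+1) \<le> K \<longrightarrow>
            (\<forall>t\<in>{ts (3*i)<..ts (3*i+1)}. deadline (\<rho> t) x = PInf))
       \<and> (\<forall>i. enat (3*i+3) \<le> K \<longrightarrow>
            (\<forall>t\<in>{ts (3*i+1)<..ts (3*i+3)}.
               deadline (\<rho> t) x = Fin (ts (3*i+1) + W dclose dmin)))
       \<and> (\<forall>k. K = enat k \<longrightarrow> (\<forall>t>ts k. deadline (\<rho> t) x = PInf)))
     \<and> (\<forall>a b. 0 \<le> a \<and> a < b \<and> (\<forall>t\<in>{a<..<b}. trackstatus (\<rho> t) x \<noteq> Incrossing) \<longrightarrow>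
            (\<forall>t\<in>{a<..<b}. xle (Fin (b - Delta_close dclose dmin dmax)) (deadline (\<rho> t) x)))"
proof -
  let ?w = "W dclose dmin"
  have "\<forall>y. \<exists>p. SM dmin dmax \<rho> y (fst p) (snd p)" using assms(7) unfolding regular_run_def by auto
  then obtain f where f: "\<forall>y. SM dmin dmax \<rho> y (fst (f y)) (snd (f y))" by metis
  define tsf where "tsf = (\<lambda>y. if y = x then ts else fst (f y))"
  define Kf where "Kf = (\<lambda>y. if y = x then K else snd (f y))"
  have smf: "\<forall>y. SM dmin dmax \<rho> y (tsf y) (Kf y)" using f assms(8) unfolding tsf_def Kf_def by auto
  have inv: "deadline (\<rho> t) x = Dl ?w ts K t" if "0 \<le> t" for t
    using invariant[OF assms(7) assms(1,2,5) smf that] unfolding tsf_def Kf_def by auto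
  have sm: "SM dmin dmax \<rho> x ts K" by (rule assms(8))
  have P0: "deadline (\<rho> 0) x = PInf" using assms(7) unfolding regular_run_def initial_state_def by auto
  have P1: "\<forall>i. enat (3*i+1) \<le> K \<longrightarrow> (\<forall>t\<in>{ts (3*i)<..ts (3*i+1)}. deadline (\<rho> t) x = PInf)"
  proof (intro allI impI ballI)
    fix i t assume i: "enat (3*i+1) \<le> K" and t: "t \<in> {ts (3*i)<..ts (3*i+1)}"
    have "phase ts K t (3*i)" using i t unfolding phase_def by auto
    moreover have "0 \<le> t" using t sm_nonneg[OF sm enat_le_mono[OF i, of "3*i"]] by auto
    ultimately show "deadline (\<rho> t) x = PInf" using inv Dl_eq[OF sm] by (simp add: dval_def)
  qed
  have P2: "\<forall>i. enat (3*i+3) \<le> K \<longrightarrow> (\<forall>t\<in>{ts (3*i+1)<..ts (3*i+3)}. deadline (\<rho> t) x = Fin (ts (3*i+1) + ?w))"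
  proof (intro allI impI ballI)
    fix i t assume i: "enat (3*i+3) \<le> K" and t: "t \<in> {ts (3*i+1)<..ts (3*i+3)}"
    have t0: "0 \<le> t" using t sm_nonneg[OF sm enat_le_mono[OF i, of "3*i+1"]] by auto
    have a1: "(3*i+1) mod 3 = 1" "(3*i+1) div 3 = i" "(3*i+2) mod 3 = 2" "(3*i+2) div 3 = i" by presburger+
    show "deadline (\<rho> t) x = Fin (ts (3*i+1) + ?w)"
    proof (cases "t \<le> ts (3*i+2)")
      case True
      have "phase ts K t (3*i+1)" using True t enat_le_mono[OF i, of "3*i+2"] unfolding phase_def by auto
      then show ?thesis using inv[OF t0] Dl_eq[OF sm] a1 by (simp add: dval_def)
    next
      case False
      have e: "Suc (3*i+2) = 3*i+3" by simp
      have "enat (3*i+3) \<le> K \<and> ts (3*i+2) < t \<and> t \<le> ts (3*i+3)" using False t i by auto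
      then have "phase ts K t (3*i+2)" unfolding phase_def e by blast
      then show ?thesis using inv[OF t0] Dl_eq[OF sm] a1 by (simp add: dval_def)
    qed
  qed
  have P3: "\<forall>k. K = enat k \<longrightarrow> (\<forall>t>ts k. deadline (\<rho> t) x = PInf)"
  proof (intro allI impI)
    fix k t assume k: "K = enat k" and t: "ts k < t"
    have "0 \<le> t" using t sm_nonneg[OF sm, of k] k by auto
    then show "deadline (\<rho> t) x = PInf" using inv Dl_none no_phase_tail[OF sm k t] by auto
  qed
  have P4: "\<forall>a b. 0 \<le> a \<and> a < b \<and> (\<forall>t\<in>{a<..<b}. trackstatus (\<rho> t) x \<noteq> Incrossing) \<longrightarrow>
            (\<forall>t\<in>{a<..<b}. xle (Fin (b - Delta_close dclose dmin dmax)) (deadline (\<rho> t) x))"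
  proof (intro allI impI ballI)
    fix a b t assume ab: "0 \<le> a \<and> a < b \<and> (\<forall>t\<in>{a<..<b}. trackstatus (\<rho> t) x \<noteq> Incrossing)"
      and t: "t \<in> {a<..<b}"
    have t0: "0 \<le> t" using ab t by auto
    show "xle (Fin (b - Delta_close dclose dmin dmax)) (deadline (\<rho> t) x)"
    proof (cases "\<exists>n. phase ts K t n")
      case False then show ?thesis using inv[OF t0] Dl_none by (simp add: xle_def)
    next
      case True
      then obtain n where n: "phase ts K t n" by blast
      define q where "q = n div 3"
      consider "n mod 3 = 0" | "n mod 3 = 1" | "n mod 3 = 2" by linarith
      then show ?thesis
      proof cases
        case 1 then show ?thesis using inv[OF t0] Dl_eq[OF sm n] by (simp add: xle_def dval_def)
      next
        case 2
        then have nq: "n = 3*q+1" unfolding q_def by presburger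
        have K2: "enat (3*q+2) \<le> K" using n nq unfolding phase_def by simp
        have K3: "enat (3*q+3) \<le> K" using sm_K3[OF sm K2] .
        have "b \<le> ts (3*q+2)"
        proof (rule ccontr)
          assume "\<not> b \<le> ts (3*q+2)"
          then have "ts (3*q+2) \<in> {a<..<b}" using t n nq unfolding phase_def by auto
          have e: "Suc (3*q+2) = 3*q+3" by simp
          moreover have "ts (3*q+2) < ts (Suc (3*q+2))" unfolding e using sm_mono[OF sm K3, of "3*q+2"] by simp
          moreover have "enat (Suc (3*q+2)) \<le> K" unfolding e by (rule K3)
          moreover have "(3*q+2) mod 3 = 2" by presburger
          ultimately have "trackstatus (\<rho> (ts (3*q+2))) x = Incrossing"
            using st_phase[OF sm, of "3*q+2" "ts (3*q+2)"] by simp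
          then show False using ab \<open>ts (3*q+2) \<in> {a<..<b}\<close> by blast
        qed
        moreover have "ts (3*q+2) - ts (3*q+1) \<le> dmax" using sm_coming[OF sm K2] by blast
        ultimately have le: "b - Delta_close dclose dmin dmax \<le> ts (3*q+1) + ?w"
          unfolding Delta_close_def W_def by linarith
        have "deadline (\<rho> t) x = Fin (ts (3*q+1) + ?w)"
          using inv[OF t0] Dl_eq[OF sm n] 2 unfolding dval_def q_def by simp
        then show ?thesis using le unfolding xle_def by (auto simp: order_le_less)
      next
        case 3
        then have nq: "n mod 3 = 2" by simp
        define v where "v = (max a (ts n) + t) / 2"
        have lt: "ts n < t" "a < t" "t < b" "t \<le> ts (Suc n)" using n t unfolding phase_def by auto
        have v: "a < v" "v < b" "ts n \<le> v" "v < ts (Suc n)" unfolding v_def using lt by auto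
        have "trackstatus (\<rho> v) x = Incrossing"
          using st_phase[OF sm _ v(3,4)] n nq unfolding phase_def by simp
        then show ?thesis using ab v by auto
      qed
    qed
  qed
  show ?thesis using P0 P1 P2 P3 P4 by blast
qed

end
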